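(* Let $(\Omega,\mathcal F,\Pr)$ be a probability space with filtration $\{\mathcal F_n\}_{n\ge0}$, and let $\{z_n\},\{a_n\},\{x_n\},\{y_n\}$ be non-negative real-valued sequences adapted to $\{\mathcal F_n\}$ satisfying $$\mathbb{E}[z_{n+1}\mid\mathcal F_n]\le(1+a_n)z_n+x_n-y_n\quad\text{a.s. for all }n\ge0.$$ Suppose: (A1) $\sum_n a_n<\infty$ a.s.; (A2) $|z_{n+1}-z_n|\le b_n(z_n+1)$ a.s. for all $n$, where $\{b_n\}$ is a non-negative real-valued sequence adapted to $\{\mathcal F_n\}$ with $\sum_n b_n^2<\infty$ a.s.; (A3) there is a constant $B\ge 0$ such that for all $n$, $z_n>B$ implies $x_n-y_n\le -c_n(z_n-B)$, where $\{c_n\}$ is a non-negative real-valued sequence adapted to $\{\mathcal F_n\}$ with $\sum_n c_n=\infty$ a.s. Then $\lim_{n\to\infty} d(z_n,[0,B])=0$ a.s.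
   Context: For $z\in\mathbb R$ and an interval $Z\subset\mathbb R$, $d(z,Z)\doteq\inf_{\tilde z\in Z}|z-\tilde z|$; in particular $d(z,[0,B])=\max(z-B,0)$ for $z\ge 0$. *)

theory Defs
  imports "HOL-Probability.Probability"
begin

end

theory Submission
  imports Defs
begin

lemma sfs_of_prob:
  assumes "prob_space M" "subalgebra M G"
  shows "sigma_finite_subalgebra M G"
proof -
  interpret prob_space M by fact
  have "finite_measure_subalgebra M G"
    unfolding finite_measure_subalgebra_def finite_measure_subalgebra_axioms_def
    using assms(2) finite_measure_axioms by simp
  then show ?thesis by (rule finite_measure_subalgebra_is_sigma_finite)
qed

lemma nce_ineq_intg:
  assumes sfs: "sigma_finite_subalgebra M G"
    and [measurable]: "f \<in> borel_measurable M" "g \<in> borel_measurable G" "h \<in> borel_measurable G"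
    and ae: "AE \<omega> in M. nn_cond_exp M G f \<omega> + g \<omega> \<le> h \<omega>"
    and A[measurable]: "A \<in> sets G"
  shows "(\<integral>\<^sup>+\<omega>. indicator A \<omega> * f \<omega> \<partial>M) + (\<integral>\<^sup>+\<omega>. indicator A \<omega> * g \<omega> \<partial>M)
          \<le> (\<integral>\<^sup>+\<omega>. indicator A \<omega> * h \<omega> \<partial>M)"
proof -
  interpret sigma_finite_subalgebra M G by fact
  have [measurable]: "A \<in> sets M" using A subalg by (meson subalgebra_def subsetD)
  have [measurable]: "g \<in> borel_measurable M" "h \<in> borel_measurable M"
    by (rule measurable_from_subalg[OF subalg], simp)+
  have "(\<integral>\<^sup>+\<omega>. indicator A \<omega> * f \<omega> \<partial>M) = (\<integral>\<^sup>+\<omega>. indicator A \<omega> * nn_cond_exp M G f \<omega> \<partial>M)"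
    by (rule nn_cond_exp_intg[symmetric]) (auto simp: A)
  then have "(\<integral>\<^sup>+\<omega>. indicator A \<omega> * f \<omega> \<partial>M) + (\<integral>\<^sup>+\<omega>. indicator A \<omega> * g \<omega> \<partial>M)
     = (\<integral>\<^sup>+\<omega>. indicator A \<omega> * nn_cond_exp M G f \<omega> + indicator A \<omega> * g \<omega> \<partial>M)"
    by (simp add: nn_integral_add)
  also have "\<dots> \<le> (\<integral>\<^sup>+\<omega>. indicator A \<omega> * h \<omega> \<partial>M)"
    apply (rule nn_integral_mono_AE)
    using ae by eventually_elim (auto simp: indicator_def distrib_left[symmetric])
  finally show ?thesis .
qed

lemma tele_sets:
  assumes mono: "\<And>k. S k \<subseteq> S (Suc k)" and sets: "\<And>k. S k \<in> sets M" and S0: "S 0 = {}"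
    and g[measurable]: "g \<in> borel_measurable M"
  shows "(\<Sum>k<N. \<integral>\<^sup>+\<omega>. indicator (S (Suc k) - S k) \<omega> * g \<omega> \<partial>M) = (\<integral>\<^sup>+\<omega>. indicator (S N) \<omega> * g \<omega> \<partial>M)"
proof (induction N)
  case 0
  then show ?case by (simp add: S0)
next
  case (Suc N)
  have [measurable]: "S k \<in> sets M" for k by (rule sets)
  have "\<And>\<omega>. indicator (S (Suc N)) \<omega> * g \<omega> = indicator (S N) \<omega> * g \<omega> + indicator (S (Suc N) - S N) \<omega> * g \<omega>"
    using mono[of N] by (auto simp: indicator_def)
  then have "(\<integral>\<^sup>+\<omega>. indicator (S (Suc N)) \<omega> * g \<omega> \<partial>M) = (\<integral>\<^sup>+\<omega>. indicator (S N) \<omega> * g \<omega> \<partial>M) + (\<integral>\<^sup>+\<omega>. indicator (S (Suc N) - S N) \<omega> * g \<omega> \<partial>M)"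
    by (simp add: nn_integral_add)
  then show ?case using Suc by simp
qed

lemma meas_mono_filt:
  assumes subalg: "\<And>n. subalgebra M (F n)"
    and filt: "\<And>n m. n \<le> m \<Longrightarrow> sets (F n) \<subseteq> sets (F m)"
    and "k \<le> n" and "f \<in> borel_measurable (F k)"
  shows "f \<in> borel_measurable (F n)"
proof (rule measurable_from_subalg[OF _ assms(4)])
  show "subalgebra (F n) (F k)" using subalg[of n] subalg[of k] filt[OF assms(3)]
    unfolding subalgebra_def by auto
qed

lemma core1:
  fixes M :: "'w measure" and F :: "nat \<Rightarrow> 'w measure" and V C D :: "nat \<Rightarrow> 'w \<Rightarrow> real" and K :: real
  assumes prob: "prob_space M"
    and subalg: "\<And>n. subalgebra M (F n)"
    and filt: "\<And>n m. n \<le> m \<Longrightarrow> sets (F n) \<subseteq> sets (F m)"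
    and measV[measurable]: "\<And>n. V n \<in> borel_measurable (F n)"
    and measC[measurable]: "\<And>n. C n \<in> borel_measurable (F n)"
    and measD[measurable]: "\<And>n. D n \<in> borel_measurable (F n)"
    and nn: "\<And>n \<omega>. \<omega> \<in> space M \<Longrightarrow> 0 \<le> V n \<omega> \<and> 0 \<le> C n \<omega> \<and> 0 \<le> D n \<omega>"
    and ineq: "\<And>n. AE \<omega> in M. nn_cond_exp M (F n) (\<lambda>\<omega>. ennreal (V (Suc n) \<omega>)) \<omega> + ennreal (D n \<omega>)
                     \<le> ennreal (V n \<omega> + C n \<omega>)"
    and Csum: "\<And>\<omega>. \<omega> \<in> space M \<Longrightarrow> summable (\<lambda>n. C n \<omega>) \<and> (\<Sum>n. C n \<omega>) \<le> K"
    and V0: "\<And>\<omega>. \<omega> \<in> space M \<Longrightarrow> V 0 \<omega> \<le> K"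
  shows "AE \<omega> in M. summable (\<lambda>n. D n \<omega>)"
proof -
  interpret prob_space M by fact
  have sf: "sigma_finite_subalgebra M (F n)" for n by (rule sfs_of_prob[OF prob subalg])
  have [measurable]: "V n \<in> borel_measurable M" for n by (rule measurable_from_subalg[OF subalg[of n] measV[of n]])
  have [measurable]: "C n \<in> borel_measurable M" for n by (rule measurable_from_subalg[OF subalg[of n] measC[of n]])
  have [measurable]: "D n \<in> borel_measurable M" for n by (rule measurable_from_subalg[OF subalg[of n] measD[of n]])
  obtain \<omega>0 where w0: "\<omega>0 \<in> space M" using not_empty by blast
  have K0: "0 \<le> K" using V0[OF w0] nn[OF w0, of 0] by linarith
  have intg: "(\<integral>\<^sup>+\<omega>. indicator A \<omega> * ennreal (V (Suc n) \<omega>) \<partial>M) + (\<integral>\<^sup>+\<omega>. indicator A \<omega> * ennreal (D n \<omega>) \<partial>M)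
      \<le> (\<integral>\<^sup>+\<omega>. indicator A \<omega> * ennreal (V n \<omega>) \<partial>M) + (\<integral>\<^sup>+\<omega>. indicator A \<omega> * ennreal (C n \<omega>) \<partial>M)"
    if A[measurable]: "A \<in> sets (F n)" for A n
  proof -
    have AM[measurable]: "A \<in> sets M" using A subalg[of n] by (meson subalgebra_def subsetD)
    have "(\<integral>\<^sup>+\<omega>. indicator A \<omega> * ennreal (V (Suc n) \<omega>) \<partial>M) + (\<integral>\<^sup>+\<omega>. indicator A \<omega> * ennreal (D n \<omega>) \<partial>M)
      \<le> (\<integral>\<^sup>+\<omega>. indicator A \<omega> * ennreal (V n \<omega> + C n \<omega>) \<partial>M)"
      by (rule nce_ineq_intg[OF sf _ _ _ ineq A]) auto
    also have "\<dots> = (\<integral>\<^sup>+\<omega>. indicator A \<omega> * ennreal (V n \<omega>) + indicator A \<omega> * ennreal (C n \<omega>) \<partial>M)"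
      by (rule nn_integral_cong) (simp add: nn ennreal_plus distrib_left)
    also have "\<dots> = (\<integral>\<^sup>+\<omega>. indicator A \<omega> * ennreal (V n \<omega>) \<partial>M) + (\<integral>\<^sup>+\<omega>. indicator A \<omega> * ennreal (C n \<omega>) \<partial>M)"
      by (simp add: nn_integral_add)
    finally show ?thesis .
  qed
  define EV where "EV n = (\<integral>\<^sup>+\<omega>. ennreal (V n \<omega>) \<partial>M)" for n
  define ED where "ED n = (\<integral>\<^sup>+\<omega>. ennreal (D n \<omega>) \<partial>M)" for n
  define EC where "EC n = (\<integral>\<^sup>+\<omega>. ennreal (C n \<omega>) \<partial>M)" for n
  have sp: "space M \<in> sets (F n)" for n
    using subalg[of n] sets.top[of "F n"] unfolding subalgebra_def by simp
  have ind1: "\<And>f. (\<integral>\<^sup>+\<omega>. indicator (space M) \<omega> * f \<omega> \<partial>M) = (\<integral>\<^sup>+\<omega>. f \<omega> \<partial>M)"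
    by (rule nn_integral_cong) simp
  have step: "EV (Suc n) + ED n \<le> EV n + EC n" for n
    using intg[OF sp[of n]] unfolding EV_def ED_def EC_def ind1 by simp
  have ind: "EV n + (\<Sum>k<n. ED k) \<le> EV 0 + (\<Sum>k<n. EC k)" for n
  proof (induction n)
    case (Suc n)
    have "EV (Suc n) + (\<Sum>k<Suc n. ED k) = (EV (Suc n) + ED n) + (\<Sum>k<n. ED k)" by (simp add: ac_simps)
    also have "\<dots> \<le> (EV n + EC n) + (\<Sum>k<n. ED k)" by (intro add_mono step order_refl)
    also have "\<dots> = (EV n + (\<Sum>k<n. ED k)) + EC n" by (simp add: ac_simps)
    also have "\<dots> \<le> (EV 0 + (\<Sum>k<n. EC k)) + EC n" by (intro add_mono Suc order_refl)
    finally show ?case by (simp add: ac_simps)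
  qed simp
  have ECs: "(\<Sum>k<n. EC k) \<le> ennreal K" for n
  proof -
    have "(\<Sum>k<n. EC k) = (\<integral>\<^sup>+\<omega>. (\<Sum>k<n. ennreal (C k \<omega>)) \<partial>M)"
      unfolding EC_def by (rule nn_integral_sum[symmetric]) simp
    also have "\<dots> \<le> (\<integral>\<^sup>+\<omega>. ennreal K \<partial>M)"
    proof (rule nn_integral_mono)
      fix \<omega> assume w: "\<omega> \<in> space M"
      have "(\<Sum>k<n. C k \<omega>) \<le> (\<Sum>k. C k \<omega>)"
        using Csum[OF w] nn[OF w] by (intro sum_le_suminf) auto
      then have "(\<Sum>k<n. C k \<omega>) \<le> K" using Csum[OF w] by linarith
      then show "(\<Sum>k<n. ennreal (C k \<omega>)) \<le> ennreal K"
        using nn[OF w] by (simp add: ennreal_leI)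
    qed
    also have "\<dots> = ennreal K" by (simp add: emeasure_space_1)
    finally show ?thesis .
  qed
  have EV0: "EV 0 \<le> ennreal K"
  proof -
    have "EV 0 \<le> (\<integral>\<^sup>+\<omega>. ennreal K \<partial>M)" unfolding EV_def
      by (rule nn_integral_mono) (simp add: V0 ennreal_leI)
    then show ?thesis by (simp add: emeasure_space_1)
  qed
  have EDs: "(\<Sum>k<n. ED k) \<le> ennreal K + ennreal K" for n
  proof -
    have "(\<Sum>k<n. ED k) \<le> EV n + (\<Sum>k<n. ED k)" by (simp add: add_increasing)
    also have "\<dots> \<le> EV 0 + (\<Sum>k<n. EC k)" by (rule ind)
    also have "\<dots> \<le> ennreal K + ennreal K" by (intro add_mono EV0 ECs)
    finally show ?thesis .
  qed
  have "(\<integral>\<^sup>+\<omega>. (\<Sum>k. ennreal (D k \<omega>)) \<partial>M) = (\<Sum>k. ED k)"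
    unfolding ED_def by (rule nn_integral_suminf) simp
  also have "\<dots> \<le> ennreal K + ennreal K"
    by (rule suminf_le_const[OF summableI EDs])
  also have "\<dots> < \<infinity>" by simp
  finally have "(\<integral>\<^sup>+\<omega>. (\<Sum>k. ennreal (D k \<omega>)) \<partial>M) \<noteq> \<infinity>"
    by simp
  then have "AE \<omega> in M. (\<Sum>k. ennreal (D k \<omega>)) \<noteq> \<infinity>"
    by (intro nn_integral_noteq_infinite) auto
  then show "AE \<omega> in M. summable (\<lambda>n. D n \<omega>)"
    using AE_space by eventually_elim (rule summable_suminf_not_top, auto simp: nn)
qed

lemma core_intg:
  fixes M :: "'w measure" and F :: "nat \<Rightarrow> 'w measure" and V C D :: "nat \<Rightarrow> 'w \<Rightarrow> real"
  assumes prob: "prob_space M"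
    and subalg: "\<And>n. subalgebra M (F n)"
    and measV[measurable]: "\<And>n. V n \<in> borel_measurable (F n)"
    and measC[measurable]: "\<And>n. C n \<in> borel_measurable (F n)"
    and measD[measurable]: "\<And>n. D n \<in> borel_measurable (F n)"
    and nn: "\<And>n \<omega>. \<omega> \<in> space M \<Longrightarrow> 0 \<le> V n \<omega> \<and> 0 \<le> C n \<omega> \<and> 0 \<le> D n \<omega>"
    and ineq: "\<And>n. AE \<omega> in M. nn_cond_exp M (F n) (\<lambda>\<omega>. ennreal (V (Suc n) \<omega>)) \<omega> + ennreal (D n \<omega>)
                     \<le> ennreal (V n \<omega> + C n \<omega>)"
    and A[measurable]: "A \<in> sets (F n)"
  shows "(\<integral>\<^sup>+\<omega>. indicator A \<omega> * ennreal (V (Suc n) \<omega>) \<partial>M) + (\<integral>\<^sup>+\<omega>. indicator A \<omega> * ennreal (D n \<omega>) \<partial>M)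
      \<le> (\<integral>\<^sup>+\<omega>. indicator A \<omega> * ennreal (V n \<omega>) \<partial>M) + (\<integral>\<^sup>+\<omega>. indicator A \<omega> * ennreal (C n \<omega>) \<partial>M)"
proof -
  have sf: "sigma_finite_subalgebra M (F n)" for n by (rule sfs_of_prob[OF prob subalg])
  have [measurable]: "V n \<in> borel_measurable M" for n by (rule measurable_from_subalg[OF subalg[of n] measV[of n]])
  have [measurable]: "C n \<in> borel_measurable M" for n by (rule measurable_from_subalg[OF subalg[of n] measC[of n]])
  have [measurable]: "D n \<in> borel_measurable M" for n by (rule measurable_from_subalg[OF subalg[of n] measD[of n]])
  have AM[measurable]: "A \<in> sets M" using A subalg[of n] by (meson subalgebra_def subsetD)
  have "(\<integral>\<^sup>+\<omega>. indicator A \<omega> * ennreal (V (Suc n) \<omega>) \<partial>M) + (\<integral>\<^sup>+\<omega>. indicator A \<omega> * ennreal (D n \<omega>) \<partial>M)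
    \<le> (\<integral>\<^sup>+\<omega>. indicator A \<omega> * ennreal (V n \<omega> + C n \<omega>) \<partial>M)"
    by (rule nce_ineq_intg[OF sf _ _ _ ineq A]) auto
  also have "\<dots> = (\<integral>\<^sup>+\<omega>. indicator A \<omega> * ennreal (V n \<omega>) + indicator A \<omega> * ennreal (C n \<omega>) \<partial>M)"
    by (rule nn_integral_cong) (simp add: nn ennreal_plus distrib_left)
  also have "\<dots> = (\<integral>\<^sup>+\<omega>. indicator A \<omega> * ennreal (V n \<omega>) \<partial>M) + (\<integral>\<^sup>+\<omega>. indicator A \<omega> * ennreal (C n \<omega>) \<partial>M)"
    by (simp add: nn_integral_add)
  finally show ?thesis .
qed

lemma core1b:
  fixes M :: "'w measure" and F :: "nat \<Rightarrow> 'w measure" and V C D :: "nat \<Rightarrow> 'w \<Rightarrow> real" and K :: real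
  assumes prob: "prob_space M"
    and subalg: "\<And>n. subalgebra M (F n)"
    and filt: "\<And>n m. n \<le> m \<Longrightarrow> sets (F n) \<subseteq> sets (F m)"
    and measV[measurable]: "\<And>n. V n \<in> borel_measurable (F n)"
    and measC[measurable]: "\<And>n. C n \<in> borel_measurable (F n)"
    and measD[measurable]: "\<And>n. D n \<in> borel_measurable (F n)"
    and nn: "\<And>n \<omega>. \<omega> \<in> space M \<Longrightarrow> 0 \<le> V n \<omega> \<and> 0 \<le> C n \<omega> \<and> 0 \<le> D n \<omega>"
    and ineq: "\<And>n. AE \<omega> in M. nn_cond_exp M (F n) (\<lambda>\<omega>. ennreal (V (Suc n) \<omega>)) \<omega> + ennreal (D n \<omega>)
                     \<le> ennreal (V n \<omega> + C n \<omega>)"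
    and Csum: "\<And>\<omega>. \<omega> \<in> space M \<Longrightarrow> summable (\<lambda>n. C n \<omega>) \<and> (\<Sum>n. C n \<omega>) \<le> K"
  shows "AE \<omega> in M. (\<forall>\<eta>>0. \<forall>m. \<exists>n\<ge>m. V n \<omega> < \<eta>) \<longrightarrow> (\<lambda>n. V n \<omega>) \<longlonglongrightarrow> 0"
proof -
  interpret prob_space M by fact
  have [measurable]: "V n \<in> borel_measurable M" for n by (rule measurable_from_subalg[OF subalg[of n] measV[of n]])
  have [measurable]: "C n \<in> borel_measurable M" for n by (rule measurable_from_subalg[OF subalg[of n] measC[of n]])
  have [measurable]: "D n \<in> borel_measurable M" for n by (rule measurable_from_subalg[OF subalg[of n] measD[of n]])
  have spF: "space (F n) = space M" for n using subalg[of n] unfolding subalgebra_def by simp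
  have setsF: "sets (F n) \<subseteq> sets M" for n using subalg[of n] unfolding subalgebra_def by simp
  define tl where "tl k \<omega> = (\<Sum>j. C (j + k) \<omega>)" for k \<omega>
  have tl_meas[measurable]: "tl k \<in> borel_measurable M" for k unfolding tl_def by measurable
  have tl_split: "tl k \<omega> = C k \<omega> + tl (Suc k) \<omega>" if w: "\<omega> \<in> space M" for k \<omega>
  proof -
    have s: "summable (\<lambda>j. C (j + k) \<omega>)" using summable_ignore_initial_segment[of "\<lambda>n. C n \<omega>" k] Csum[OF w] by simp
    show ?thesis unfolding tl_def using suminf_split_head[OF s] by simp
  qed
  have tl_nn: "0 \<le> tl k \<omega>" if w: "\<omega> \<in> space M" for k \<omega>
  proof -
    have s: "summable (\<lambda>j. C (j + k) \<omega>)" using summable_ignore_initial_segment[of "\<lambda>n. C n \<omega>" k] Csum[OF w] by simp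
    show ?thesis unfolding tl_def using nn[OF w] by (intro suminf_nonneg[OF s]) auto
  qed
  have tl_anti: "tl k \<omega> \<le> tl m \<omega>" if w: "\<omega> \<in> space M" and "m \<le> k" for k m \<omega>
    using \<open>m \<le> k\<close>
  proof (induction k)
    case 0 then show ?case by simp
  next
    case (Suc k)
    show ?case
    proof (cases "m = Suc k")
      case False
      then have "m \<le> k" using Suc by simp
      then show ?thesis using Suc tl_split[OF w, of k] nn[OF w, of k] by linarith
    qed simp
  qed
  have tl_le: "tl k \<omega> \<le> K" if w: "\<omega> \<in> space M" for k \<omega>
    using tl_anti[OF w, of 0 k] Csum[OF w] unfolding tl_def by simp
  define Y where "Y k \<omega> = ennreal (V k \<omega>) + ennreal (tl k \<omega>)" for k \<omega>
  have Y_meas[measurable]: "Y k \<in> borel_measurable M" for k unfolding Y_def by measurable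
  have supY: "(\<integral>\<^sup>+\<omega>. indicator A \<omega> * Y (Suc N) \<omega> \<partial>M) \<le> (\<integral>\<^sup>+\<omega>. indicator A \<omega> * Y N \<omega> \<partial>M)"
    if A: "A \<in> sets (F N)" for A N
  proof -
    have AM[measurable]: "A \<in> sets M" using A setsF by auto
    have "(\<integral>\<^sup>+\<omega>. indicator A \<omega> * Y (Suc N) \<omega> \<partial>M)
       = (\<integral>\<^sup>+\<omega>. indicator A \<omega> * ennreal (V (Suc N) \<omega>) \<partial>M) + (\<integral>\<^sup>+\<omega>. indicator A \<omega> * ennreal (tl (Suc N) \<omega>) \<partial>M)"
      unfolding Y_def by (simp add: distrib_left nn_integral_add)
    also have "\<dots> \<le> ((\<integral>\<^sup>+\<omega>. indicator A \<omega> * ennreal (V N \<omega>) \<partial>M) + (\<integral>\<^sup>+\<omega>. indicator A \<omega> * ennreal (C N \<omega>) \<partial>M))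
         + (\<integral>\<^sup>+\<omega>. indicator A \<omega> * ennreal (tl (Suc N) \<omega>) \<partial>M)"
    proof (intro add_mono order_refl)
      note I = core_intg[OF prob subalg measV measC measD nn ineq A]
      show "(\<integral>\<^sup>+\<omega>. indicator A \<omega> * ennreal (V (Suc N) \<omega>) \<partial>M) \<le> (\<integral>\<^sup>+\<omega>. indicator A \<omega> * ennreal (V N \<omega>) \<partial>M) + (\<integral>\<^sup>+\<omega>. indicator A \<omega> * ennreal (C N \<omega>) \<partial>M)"
        by (rule order_trans[OF add_increasing2[OF zero_le order_refl] I])
    qed
    also have "\<dots> = (\<integral>\<^sup>+\<omega>. indicator A \<omega> * ennreal (V N \<omega>) \<partial>M) + (\<integral>\<^sup>+\<omega>. indicator A \<omega> * ennreal (C N \<omega>) + indicator A \<omega> * ennreal (tl (Suc N) \<omega>) \<partial>M)"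
      by (simp add: nn_integral_add add.assoc)
    also have "(\<integral>\<^sup>+\<omega>. indicator A \<omega> * ennreal (C N \<omega>) + indicator A \<omega> * ennreal (tl (Suc N) \<omega>) \<partial>M)
        = (\<integral>\<^sup>+\<omega>. indicator A \<omega> * ennreal (tl N \<omega>) \<partial>M)"
      by (rule nn_integral_cong) (simp add: tl_split[of _ N] nn tl_nn ennreal_plus distrib_left)
    also have "(\<integral>\<^sup>+\<omega>. indicator A \<omega> * ennreal (V N \<omega>) \<partial>M) + (\<integral>\<^sup>+\<omega>. indicator A \<omega> * ennreal (tl N \<omega>) \<partial>M)
        = (\<integral>\<^sup>+\<omega>. indicator A \<omega> * Y N \<omega> \<partial>M)"
      unfolding Y_def by (simp add: distrib_left nn_integral_add)
    finally show ?thesis .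
  qed
  have claim: "ennreal lam * emeasure M X \<le> ennreal \<eta> + (\<integral>\<^sup>+\<omega>. ennreal (tl m \<omega>) \<partial>M)"
    if lam: "0 < lam" and eta: "0 < \<eta>" and X: "X \<in> sets M"
      and Xsub: "X \<subseteq> {\<omega>\<in>space M. \<exists>i\<ge>m. V i \<omega> < \<eta> \<and> (\<exists>j\<ge>i. lam \<le> V j \<omega>)}" for lam \<eta> X m
  proof -
    define Tlt where "Tlt k = {\<omega>\<in>space M. \<exists>i. m \<le> i \<and> i < k \<and> V i \<omega> < \<eta>}" for k
    define Slt where "Slt k = {\<omega>\<in>space M. \<exists>i j. m \<le> i \<and> i \<le> j \<and> j < k \<and> V i \<omega> < \<eta> \<and> lam \<le> V j \<omega>}" for k
    have T0: "Tlt 0 = {}" and S0: "Slt 0 = {}" unfolding Tlt_def Slt_def by auto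
    have Tmono: "Tlt k \<subseteq> Tlt (Suc k)" for k unfolding Tlt_def by auto
    have Smono: "Slt k \<subseteq> Slt (Suc k)" for k unfolding Slt_def by force
    have ST: "Slt k \<subseteq> Tlt k" for k unfolding Slt_def Tlt_def by force
    have TsetsF: "Tlt (Suc N) \<in> sets (F N)" for N
    proof -
      have eq: "Tlt (Suc N) = (\<Union>i\<in>{m..N}. {\<omega>\<in>space (F N). V i \<omega> < \<eta>})"
        unfolding Tlt_def spF by (force simp: less_Suc_eq_le)
      have "{\<omega>\<in>space (F N). V i \<omega> < \<eta>} \<in> sets (F N)" if "i \<in> {m..N}" for i
      proof -
        have [measurable]: "V i \<in> borel_measurable (F N)"
          using meas_mono_filt[where M=M and F=F and k=i and n=N, OF subalg filt _ measV[of i]] that by simp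
        show ?thesis by measurable
      qed
      then show ?thesis unfolding eq by blast
    qed
    have SsetsF: "Slt (Suc N) \<in> sets (F N)" for N
    proof -
      have eq: "Slt (Suc N) = (\<Union>i\<in>{m..N}. \<Union>j\<in>{i..N}. {\<omega>\<in>space (F N). V i \<omega> < \<eta> \<and> lam \<le> V j \<omega>})"
        unfolding Slt_def spF by (force simp: less_Suc_eq_le)
      have "{\<omega>\<in>space (F N). V i \<omega> < \<eta> \<and> lam \<le> V j \<omega>} \<in> sets (F N)" if "i \<in> {m..N}" "j \<in> {i..N}" for i j
      proof -
        have [measurable]: "V i \<in> borel_measurable (F N)"
          using meas_mono_filt[where M=M and F=F and k=i and n=N, OF subalg filt _ measV[of i]] that by simp
        have [measurable]: "V j \<in> borel_measurable (F N)"
          using meas_mono_filt[where M=M and F=F and k=j and n=N, OF subalg filt _ measV[of j]] that by simp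
        show ?thesis by measurable
      qed
      then show ?thesis unfolding eq by blast
    qed
    have Tsets[measurable]: "Tlt k \<in> sets M" for k
      using TsetsF[of "k - 1"] setsF T0 by (cases k) auto
    have Ssets[measurable]: "Slt k \<in> sets M" for k
      using SsetsF[of "k - 1"] setsF S0 by (cases k) auto
    define TI where "TI k = Tlt (Suc k) - Tlt k" for k
    define SI where "SI k = Slt (Suc k) - Slt k" for k
    define R where "R N = Tlt (Suc N) - Slt (Suc N)" for N
    have RF: "R N \<in> sets (F N)" for N unfolding R_def using TsetsF SsetsF by auto
    have [measurable]: "TI k \<in> sets M" "SI k \<in> sets M" "R k \<in> sets M" for k
      unfolding TI_def SI_def R_def by auto
    have qclaim: "(\<Sum>k<Suc N. \<integral>\<^sup>+\<omega>. indicator (SI k) \<omega> * Y k \<omega> \<partial>M) + (\<integral>\<^sup>+\<omega>. indicator (R N) \<omega> * Y N \<omega> \<partial>M)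
        \<le> (\<Sum>k<Suc N. \<integral>\<^sup>+\<omega>. indicator (TI k) \<omega> * Y k \<omega> \<partial>M)" for N
    proof (induction N)
      case 0
      have "\<And>\<omega>. indicator (SI 0) \<omega> * Y 0 \<omega> + indicator (R 0) \<omega> * Y 0 \<omega> = indicator (TI 0) \<omega> * Y 0 \<omega>"
        using ST[of 1] unfolding SI_def R_def TI_def S0 T0 by (auto simp: indicator_def)
      then have "(\<integral>\<^sup>+\<omega>. indicator (SI 0) \<omega> * Y 0 \<omega> \<partial>M) + (\<integral>\<^sup>+\<omega>. indicator (R 0) \<omega> * Y 0 \<omega> \<partial>M)
          = (\<integral>\<^sup>+\<omega>. indicator (TI 0) \<omega> * Y 0 \<omega> \<partial>M)"
        by (simp add: nn_integral_add[symmetric])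
      then show ?case by simp
    next
      case (Suc N)
      have pw: "\<And>\<omega>. indicator (SI (Suc N)) \<omega> * Y (Suc N) \<omega> + indicator (R (Suc N)) \<omega> * Y (Suc N) \<omega>
          = indicator (R N) \<omega> * Y (Suc N) \<omega> + indicator (TI (Suc N)) \<omega> * Y (Suc N) \<omega>"
        using ST[of "Suc (Suc N)"] ST[of "Suc N"] Smono[of "Suc N"] Tmono[of "Suc N"]
        unfolding SI_def R_def TI_def by (auto simp: indicator_def)
      have "(\<integral>\<^sup>+\<omega>. indicator (SI (Suc N)) \<omega> * Y (Suc N) \<omega> \<partial>M) + (\<integral>\<^sup>+\<omega>. indicator (R (Suc N)) \<omega> * Y (Suc N) \<omega> \<partial>M)
          = (\<integral>\<^sup>+\<omega>. indicator (R N) \<omega> * Y (Suc N) \<omega> \<partial>M) + (\<integral>\<^sup>+\<omega>. indicator (TI (Suc N)) \<omega> * Y (Suc N) \<omega> \<partial>M)"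
        by (simp add: nn_integral_add[symmetric] pw)
      also have "\<dots> \<le> (\<integral>\<^sup>+\<omega>. indicator (R N) \<omega> * Y N \<omega> \<partial>M) + (\<integral>\<^sup>+\<omega>. indicator (TI (Suc N)) \<omega> * Y (Suc N) \<omega> \<partial>M)"
        by (intro add_mono order_refl supY RF)
      finally have *: "(\<integral>\<^sup>+\<omega>. indicator (SI (Suc N)) \<omega> * Y (Suc N) \<omega> \<partial>M) + (\<integral>\<^sup>+\<omega>. indicator (R (Suc N)) \<omega> * Y (Suc N) \<omega> \<partial>M)
          \<le> (\<integral>\<^sup>+\<omega>. indicator (R N) \<omega> * Y N \<omega> \<partial>M) + (\<integral>\<^sup>+\<omega>. indicator (TI (Suc N)) \<omega> * Y (Suc N) \<omega> \<partial>M)" .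
      have "(\<Sum>k<Suc (Suc N). \<integral>\<^sup>+\<omega>. indicator (SI k) \<omega> * Y k \<omega> \<partial>M) + (\<integral>\<^sup>+\<omega>. indicator (R (Suc N)) \<omega> * Y (Suc N) \<omega> \<partial>M)
          = (\<Sum>k<Suc N. \<integral>\<^sup>+\<omega>. indicator (SI k) \<omega> * Y k \<omega> \<partial>M) + ((\<integral>\<^sup>+\<omega>. indicator (SI (Suc N)) \<omega> * Y (Suc N) \<omega> \<partial>M) + (\<integral>\<^sup>+\<omega>. indicator (R (Suc N)) \<omega> * Y (Suc N) \<omega> \<partial>M))"
        by (simp add: add.assoc)
      also have "\<dots> \<le> (\<Sum>k<Suc N. \<integral>\<^sup>+\<omega>. indicator (SI k) \<omega> * Y k \<omega> \<partial>M) + ((\<integral>\<^sup>+\<omega>. indicator (R N) \<omega> * Y N \<omega> \<partial>M) + (\<integral>\<^sup>+\<omega>. indicator (TI (Suc N)) \<omega> * Y (Suc N) \<omega> \<partial>M))"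
        by (intro add_mono order_refl *)
      also have "\<dots> = ((\<Sum>k<Suc N. \<integral>\<^sup>+\<omega>. indicator (SI k) \<omega> * Y k \<omega> \<partial>M) + (\<integral>\<^sup>+\<omega>. indicator (R N) \<omega> * Y N \<omega> \<partial>M)) + (\<integral>\<^sup>+\<omega>. indicator (TI (Suc N)) \<omega> * Y (Suc N) \<omega> \<partial>M)"
        by (simp add: add.assoc)
      also have "\<dots> \<le> (\<Sum>k<Suc N. \<integral>\<^sup>+\<omega>. indicator (TI k) \<omega> * Y k \<omega> \<partial>M) + (\<integral>\<^sup>+\<omega>. indicator (TI (Suc N)) \<omega> * Y (Suc N) \<omega> \<partial>M)"
        by (intro add_mono order_refl Suc)
      also have "\<dots> = (\<Sum>k<Suc (Suc N). \<integral>\<^sup>+\<omega>. indicator (TI k) \<omega> * Y k \<omega> \<partial>M)"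
        by simp
      finally show ?case .
    qed
    have SIlam: "lam \<le> V k \<omega>" if "\<omega> \<in> SI k" for k \<omega>
    proof -
      from that obtain i j where ij: "m \<le> i" "i \<le> j" "j < Suc k" "V i \<omega> < \<eta>" "lam \<le> V j \<omega>" and w: "\<omega> \<in> space M"
        and nS: "\<omega> \<notin> Slt k"
        unfolding SI_def Slt_def by blast
      have "j = k"
      proof (rule ccontr)
        assume "j \<noteq> k"
        then have "j < k" using ij by simp
        then have "\<omega> \<in> Slt k" unfolding Slt_def using ij w by blast
        then show False using nS by simp
      qed
      then show ?thesis using ij by simp
    qed
    have TIeta: "V k \<omega> < \<eta> \<and> m \<le> k \<and> \<omega> \<in> space M" if "\<omega> \<in> TI k" for k \<omega>
    proof -
      from that obtain i where i: "m \<le> i" "i < Suc k" "V i \<omega> < \<eta>" and w: "\<omega> \<in> space M"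
        and nT: "\<omega> \<notin> Tlt k"
        unfolding TI_def Tlt_def by blast
      have "i = k"
      proof (rule ccontr)
        assume "i \<noteq> k"
        then have "i < k" using i by simp
        then have "\<omega> \<in> Tlt k" unfolding Tlt_def using i w by blast
        then show False using nT by simp
      qed
      then show ?thesis using i w by simp
    qed
    have boundS: "ennreal lam * emeasure M (Slt N) \<le> ennreal \<eta> + (\<integral>\<^sup>+\<omega>. ennreal (tl m \<omega>) \<partial>M)" for N
    proof (cases N)
      case 0
      then show ?thesis by (simp add: S0)
    next
      case (Suc N')
      have "ennreal lam * emeasure M (Slt (Suc N')) = (\<integral>\<^sup>+\<omega>. indicator (Slt (Suc N')) \<omega> * ennreal lam \<partial>M)"
        by (simp add: nn_integral_cmult_indicator[symmetric] mult.commute)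
      also have "\<dots> = (\<Sum>k<Suc N'. \<integral>\<^sup>+\<omega>. indicator (SI k) \<omega> * ennreal lam \<partial>M)"
        unfolding SI_def by (rule tele_sets[symmetric]) (auto simp: Smono S0)
      also have "\<dots> \<le> (\<Sum>k<Suc N'. \<integral>\<^sup>+\<omega>. indicator (SI k) \<omega> * Y k \<omega> \<partial>M)"
      proof (intro sum_mono nn_integral_mono)
        fix k \<omega> assume "\<omega> \<in> space M"
        show "indicator (SI k) \<omega> * ennreal lam \<le> indicator (SI k) \<omega> * Y k \<omega>"
        proof (cases "\<omega> \<in> SI k")
          case True
          then have "ennreal lam \<le> ennreal (V k \<omega>)" using SIlam by (simp add: ennreal_leI)
          also have "\<dots> \<le> Y k \<omega>" unfolding Y_def by simp
          finally show ?thesis using True by simp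
        qed simp
      qed
      also have "\<dots> \<le> (\<Sum>k<Suc N'. \<integral>\<^sup>+\<omega>. indicator (SI k) \<omega> * Y k \<omega> \<partial>M) + (\<integral>\<^sup>+\<omega>. indicator (R N') \<omega> * Y N' \<omega> \<partial>M)"
        by (rule add_increasing2[OF zero_le order_refl])
      also have "\<dots> \<le> (\<Sum>k<Suc N'. \<integral>\<^sup>+\<omega>. indicator (TI k) \<omega> * Y k \<omega> \<partial>M)"
        by (rule qclaim)
      also have "\<dots> \<le> (\<Sum>k<Suc N'. \<integral>\<^sup>+\<omega>. indicator (TI k) \<omega> * (ennreal \<eta> + ennreal (tl m \<omega>)) \<partial>M)"
      proof (intro sum_mono nn_integral_mono)
        fix k \<omega> assume "\<omega> \<in> space M"
        show "indicator (TI k) \<omega> * Y k \<omega> \<le> indicator (TI k) \<omega> * (ennreal \<eta> + ennreal (tl m \<omega>))"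
        proof (cases "\<omega> \<in> TI k")
          case True
          then have t: "V k \<omega> < \<eta>" "m \<le> k" "\<omega> \<in> space M" using TIeta by auto
          have "Y k \<omega> \<le> ennreal \<eta> + ennreal (tl m \<omega>)" unfolding Y_def
            using t tl_anti[OF t(3) t(2)] by (intro add_mono ennreal_leI) auto
          then show ?thesis using True by simp
        qed simp
      qed
      also have "\<dots> = (\<integral>\<^sup>+\<omega>. indicator (Tlt (Suc N')) \<omega> * (ennreal \<eta> + ennreal (tl m \<omega>)) \<partial>M)"
        unfolding TI_def by (rule tele_sets) (auto simp: Tmono T0)
      also have "\<dots> \<le> (\<integral>\<^sup>+\<omega>. (ennreal \<eta> + ennreal (tl m \<omega>)) \<partial>M)"
        by (intro nn_integral_mono) (simp add: indicator_def)
      also have "\<dots> = ennreal \<eta> + (\<integral>\<^sup>+\<omega>. ennreal (tl m \<omega>) \<partial>M)"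
        by (simp add: nn_integral_add emeasure_space_1)
      finally show ?thesis using Suc by simp
    qed
    have "X \<subseteq> (\<Union>N. Slt N)"
    proof
      fix \<omega> assume "\<omega> \<in> X"
      then obtain i j where "\<omega> \<in> space M" "m \<le> i" "V i \<omega> < \<eta>" "i \<le> j" "lam \<le> V j \<omega>" using Xsub by blast
      then have "\<omega> \<in> Slt (Suc j)" unfolding Slt_def by auto
      then show "\<omega> \<in> (\<Union>N. Slt N)" by blast
    qed
    then have "emeasure M X \<le> emeasure M (\<Union>N. Slt N)" by (intro emeasure_mono) auto
    also have "\<dots> = (SUP N. emeasure M (Slt N))"
    proof (rule SUP_emeasure_incseq[symmetric])
      show "incseq Slt" by (rule incseq_SucI) (rule Smono)
    qed auto
    finally have "ennreal lam * emeasure M X \<le> ennreal lam * (SUP N. emeasure M (Slt N))"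
      by (rule mult_left_mono) simp
    also have "\<dots> = (SUP N. ennreal lam * emeasure M (Slt N))" by (rule SUP_mult_left_ennreal)
    also have "\<dots> \<le> ennreal \<eta> + (\<integral>\<^sup>+\<omega>. ennreal (tl m \<omega>) \<partial>M)"
      by (rule SUP_least) (rule boundS)
    finally show ?thesis .
  qed
  define tr where "tr m = integral\<^sup>L M (tl m)" for m
  have tl_int: "integrable M (tl m)" for m
    by (rule integrable_const_bound[where B=K]) (auto simp: tl_nn tl_le)
  have tr_eq: "(\<integral>\<^sup>+\<omega>. ennreal (tl m \<omega>) \<partial>M) = ennreal (tr m)" for m
    unfolding tr_def by (rule nn_integral_eq_integral[OF tl_int]) (auto simp: tl_nn)
  have tr_nn: "0 \<le> tr m" for m unfolding tr_def by (rule integral_nonneg_AE) (auto simp: tl_nn)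
  have tr_lim: "tr \<longlonglongrightarrow> 0"
  proof -
    have "(\<lambda>i. integral\<^sup>L M (tl i)) \<longlonglongrightarrow> integral\<^sup>L M (\<lambda>_. 0::real)"
    proof (rule integral_dominated_convergence[where w="\<lambda>_. K"])
      show "AE \<omega> in M. (\<lambda>i. tl i \<omega>) \<longlonglongrightarrow> 0"
        using AE_space
      proof eventually_elim
        case (elim \<omega>)
        show ?case unfolding tl_def using suminf_exist_split2[of "\<lambda>n. C n \<omega>"] Csum[OF elim] by simp
      qed
      show "AE \<omega> in M. norm (tl i \<omega>) \<le> K" for i
        using AE_space by eventually_elim (auto simp: tl_nn tl_le)
    qed auto
    then show ?thesis unfolding tr_def by simp
  qed
  define E where "E lam = {\<omega>\<in>space M. (\<forall>r::nat. \<forall>m::nat. \<exists>n\<ge>m. V n \<omega> < 1 / real (Suc r)) \<and> (\<forall>m::nat. \<exists>n\<ge>m. lam \<le> V n \<omega>)}" for lam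
  have Emeas[measurable]: "E lam \<in> sets M" for lam unfolding E_def by measurable
  have Enull: "E lam \<in> null_sets M" if lam: "0 < lam" for lam
  proof -
    have bnd: "lam * measure M (E lam) \<le> 1 / real (Suc r) + tr m" for r m
    proof -
      have "ennreal lam * emeasure M (E lam) \<le> ennreal (1 / real (Suc r)) + (\<integral>\<^sup>+\<omega>. ennreal (tl m \<omega>) \<partial>M)"
      proof (rule claim[OF lam _ Emeas])
        show "0 < 1 / real (Suc r)" by simp
        show "E lam \<subseteq> {\<omega> \<in> space M. \<exists>i\<ge>m. V i \<omega> < 1 / real (Suc r) \<and> (\<exists>j\<ge>i. lam \<le> V j \<omega>)}"
        proof
          fix \<omega> assume "\<omega> \<in> E lam"
          then have w: "\<omega> \<in> space M" and h1: "\<forall>r::nat. \<forall>m::nat. \<exists>n\<ge>m. V n \<omega> < 1 / real (Suc r)"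
            and h2: "\<forall>m::nat. \<exists>n\<ge>m. lam \<le> V n \<omega>" unfolding E_def by auto
          obtain i where i: "i \<ge> m" "V i \<omega> < 1 / real (Suc r)" using h1 by blast
          obtain j where j: "j \<ge> i" "lam \<le> V j \<omega>" using h2 by blast
          show "\<omega> \<in> {\<omega> \<in> space M. \<exists>i\<ge>m. V i \<omega> < 1 / real (Suc r) \<and> (\<exists>j\<ge>i. lam \<le> V j \<omega>)}"
            using w i j by blast
        qed
      qed
      then have "ennreal (lam * measure M (E lam)) \<le> ennreal (1 / real (Suc r)) + ennreal (tr m)"
        using lam tr_nn[of m] by (simp add: emeasure_eq_measure tr_eq ennreal_mult ennreal_plus)
      moreover have "ennreal (1 / real (Suc r)) + ennreal (tr m) = ennreal (1 / real (Suc r) + tr m)"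
        by (rule ennreal_plus[symmetric]) (auto simp: tr_nn)
      ultimately have B: "ennreal (lam * measure M (E lam)) \<le> ennreal (1 / real (Suc r) + tr m)"
        by simp
      have nn': "0 \<le> 1 / real (Suc r) + tr m" using tr_nn[of m] by simp
      show ?thesis using B ennreal_le_iff[OF nn'] by blast
    qed
    have "measure M (E lam) \<le> 0"
    proof (rule ccontr)
      assume "\<not> measure M (E lam) \<le> 0"
      then have pos: "0 < lam * measure M (E lam) / 2" using lam by simp
      obtain m where m: "tr m < lam * measure M (E lam) / 2"
        using order_tendstoD(2)[OF tr_lim pos] by (auto simp: eventually_sequentially)
      obtain r where r: "inverse (real (Suc r)) < lam * measure M (E lam) / 2"
        using reals_Archimedean[OF pos] by blast
      have "lam * measure M (E lam) \<le> 1 / real (Suc r) + tr m" by (rule bnd)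
      then show False using m r by (simp add: inverse_eq_divide)
    qed
    then have "measure M (E lam) = 0" by (simp add: measure_nonneg order_antisym)
    then show ?thesis by (simp add: emeasure_eq_measure null_setsI)
  qed
  have "AE \<omega> in M. \<forall>r::nat. \<omega> \<notin> E (1 / real (Suc r))"
    unfolding AE_all_countable by (intro allI AE_not_in Enull) simp
  then show ?thesis using AE_space
  proof eventually_elim
    case (elim \<omega>)
    show ?case
    proof
      assume liminf: "\<forall>\<eta>>0. \<forall>m. \<exists>n\<ge>m. V n \<omega> < \<eta>"
      show "(\<lambda>n. V n \<omega>) \<longlonglongrightarrow> 0"
      proof (rule LIMSEQ_I)
        fix \<epsilon> :: real assume "0 < \<epsilon>"
        obtain r where r: "inverse (real (Suc r)) < \<epsilon>" using reals_Archimedean[OF \<open>0 < \<epsilon>\<close>] by blast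
        have h1: "\<forall>r::nat. \<forall>m::nat. \<exists>n\<ge>m. V n \<omega> < 1 / real (Suc r)"
          using liminf by simp
        have "\<omega> \<notin> E (1 / real (Suc r))" using elim by blast
        then have "\<not> (\<forall>m::nat. \<exists>n\<ge>m. 1 / real (Suc r) \<le> V n \<omega>)"
          using h1 elim unfolding E_def by blast
        then obtain m where m: "\<forall>n\<ge>m. V n \<omega> < 1 / real (Suc r)" by (meson not_le)
        show "\<exists>no. \<forall>n\<ge>no. norm (V n \<omega> - 0) < \<epsilon>"
        proof (intro exI allI impI)
          fix n assume "m \<le> n"
          then have "V n \<omega> < 1 / real (Suc r)" using m by blast
          then show "norm (V n \<omega> - 0) < \<epsilon>" using r nn[OF elim(2), of n] by (simp add: inverse_eq_divide)
        qed
      qed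
    qed
  qed
qed

lemma sets_le_const:
  fixes f :: "'a \<Rightarrow> real"
  assumes [measurable]: "f \<in> borel_measurable N"
  shows "{x\<in>space N. f x \<le> c} \<in> sets N"
  by measurable

lemma core0:
  fixes M :: "'w measure" and F :: "nat \<Rightarrow> 'w measure" and V C D :: "nat \<Rightarrow> 'w \<Rightarrow> real"
  assumes prob: "prob_space M"
    and subalg: "\<And>n. subalgebra M (F n)"
    and filt: "\<And>n m. n \<le> m \<Longrightarrow> sets (F n) \<subseteq> sets (F m)"
    and measV[measurable]: "\<And>n. V n \<in> borel_measurable (F n)"
    and measC[measurable]: "\<And>n. C n \<in> borel_measurable (F n)"
    and measD[measurable]: "\<And>n. D n \<in> borel_measurable (F n)"
    and nn: "\<And>n \<omega>. \<omega> \<in> space M \<Longrightarrow> 0 \<le> V n \<omega> \<and> 0 \<le> C n \<omega> \<and> 0 \<le> D n \<omega>"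
    and ineq: "\<And>n. AE \<omega> in M. nn_cond_exp M (F n) (\<lambda>\<omega>. ennreal (V (Suc n) \<omega>)) \<omega> + ennreal (D n \<omega>)
                     \<le> ennreal (V n \<omega> + C n \<omega>)"
    and Csum: "AE \<omega> in M. summable (\<lambda>n. C n \<omega>)"
  shows "AE \<omega> in M. summable (\<lambda>n. D n \<omega>) \<and> ((\<forall>\<eta>>0. \<forall>m. \<exists>n\<ge>m. V n \<omega> < \<eta>) \<longrightarrow> (\<lambda>n. V n \<omega>) \<longlonglongrightarrow> 0)"
proof -
  interpret prob_space M by fact
  have sf: "sigma_finite_subalgebra M (F n)" for n by (rule sfs_of_prob[OF prob subalg])
  have [measurable]: "V n \<in> borel_measurable M" for n by (rule measurable_from_subalg[OF subalg[of n] measV[of n]])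
  have [measurable]: "C n \<in> borel_measurable M" for n by (rule measurable_from_subalg[OF subalg[of n] measC[of n]])
  have [measurable]: "D n \<in> borel_measurable M" for n by (rule measurable_from_subalg[OF subalg[of n] measD[of n]])
  have spF: "space (F n) = space M" for n using subalg[of n] unfolding subalgebra_def by simp
  define G where "G K n = {\<omega>\<in>space M. V 0 \<omega> \<le> real K \<and> (\<Sum>k\<le>n. C k \<omega>) \<le> real K}" for K :: nat and n
  have GF: "G K n \<in> sets (F n)" for K n
  proof -
    have [measurable]: "V 0 \<in> borel_measurable (F n)"
      using meas_mono_filt[where M=M and F=F and k=0 and n=n, OF subalg filt _ measV[of 0]] by simp
    have "C k \<in> borel_measurable (F n)" if "k \<in> {..n}" for k
      using meas_mono_filt[where M=M and F=F and k=k and n=n, OF subalg filt _ measC[of k]] that by simp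
    then have [measurable]: "(\<lambda>\<omega>. \<Sum>k\<le>n. C k \<omega>) \<in> borel_measurable (F n)"
      by (rule borel_measurable_sum)
    have "G K n = {\<omega>\<in>space (F n). V 0 \<omega> \<le> real K} \<inter> {\<omega>\<in>space (F n). (\<Sum>k\<le>n. C k \<omega>) \<le> real K}"
      unfolding G_def spF by auto
    then show ?thesis using sets_le_const[OF \<open>V 0 \<in> borel_measurable (F n)\<close>]
      sets_le_const[OF \<open>(\<lambda>\<omega>. \<Sum>k\<le>n. C k \<omega>) \<in> borel_measurable (F n)\<close>] by auto
  qed
  have Gdec: "G K (Suc n) \<subseteq> G K n" for K n
  proof
    fix \<omega> assume "\<omega> \<in> G K (Suc n)"
    then have w: "\<omega> \<in> space M" and h: "V 0 \<omega> \<le> real K" "(\<Sum>k\<le>Suc n. C k \<omega>) \<le> real K" unfolding G_def by auto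
    have "(\<Sum>k\<le>n. C k \<omega>) \<le> (\<Sum>k\<le>Suc n. C k \<omega>)" using nn[OF w, of "Suc n"] by simp
    then show "\<omega> \<in> G K n" using w h unfolding G_def by auto
  qed
  have Gdec': "G K n \<subseteq> G K k" if "k \<le> n" for K n k
    using that
  proof (induction n)
    case (Suc n) then show ?case using Gdec[of K n] by (cases "k = Suc n") auto
  qed simp
  define VK where "VK K n \<omega> = indicator (G K n) \<omega> * V n \<omega>" for K n \<omega>
  define CK where "CK K n \<omega> = indicator (G K n) \<omega> * C n \<omega>" for K n \<omega>
  define DK where "DK K n \<omega> = indicator (G K n) \<omega> * D n \<omega>" for K n \<omega>
  have GF'[measurable]: "G K n \<in> sets (F n)" for K n by (rule GF)
  have GM[measurable]: "G K n \<in> sets M" for K n using GF subalg[of n] unfolding subalgebra_def by blast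
  have mVK[measurable]: "VK K n \<in> borel_measurable (F n)" for K n unfolding VK_def by measurable
  have mCK[measurable]: "CK K n \<in> borel_measurable (F n)" for K n unfolding CK_def by measurable
  have mDK[measurable]: "DK K n \<in> borel_measurable (F n)" for K n unfolding DK_def by measurable
  have [measurable]: "VK K n \<in> borel_measurable M" for K n by (rule measurable_from_subalg[OF subalg[of n] mVK])
  have [measurable]: "CK K n \<in> borel_measurable M" for K n by (rule measurable_from_subalg[OF subalg[of n] mCK])
  have [measurable]: "DK K n \<in> borel_measurable M" for K n by (rule measurable_from_subalg[OF subalg[of n] mDK])
  have nnK: "0 \<le> VK K n \<omega> \<and> 0 \<le> CK K n \<omega> \<and> 0 \<le> DK K n \<omega>" if "\<omega> \<in> space M" for K n \<omega>
    unfolding VK_def CK_def DK_def using nn[OF that] by auto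
  have ineqK: "AE \<omega> in M. nn_cond_exp M (F n) (\<lambda>\<omega>. ennreal (VK K (Suc n) \<omega>)) \<omega> + ennreal (DK K n \<omega>)
                     \<le> ennreal (VK K n \<omega> + CK K n \<omega>)" for K n
  proof -
    have "AE \<omega> in M. nn_cond_exp M (F n) (\<lambda>\<omega>. ennreal (VK K (Suc n) \<omega>)) \<omega>
        \<le> nn_cond_exp M (F n) (\<lambda>\<omega>. indicator (G K n) \<omega> * ennreal (V (Suc n) \<omega>)) \<omega>"
    proof (rule sigma_finite_subalgebra.nn_cond_exp_mono[OF sf])
      show "AE \<omega> in M. ennreal (VK K (Suc n) \<omega>) \<le> indicator (G K n) \<omega> * ennreal (V (Suc n) \<omega>)"
        using Gdec[of K n] unfolding VK_def by (auto simp: indicator_def)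
    qed auto
    moreover have "AE \<omega> in M. indicator (G K n) \<omega> * nn_cond_exp M (F n) (\<lambda>\<omega>. ennreal (V (Suc n) \<omega>)) \<omega>
        = nn_cond_exp M (F n) (\<lambda>\<omega>. indicator (G K n) \<omega> * ennreal (V (Suc n) \<omega>)) \<omega>"
      by (rule sigma_finite_subalgebra.nn_cond_exp_prod[OF sf]) auto
    ultimately show ?thesis using ineq[of n] AE_space
    proof eventually_elim
      case (elim \<omega>)
      show ?case
      proof (cases "\<omega> \<in> G K n")
        case True
        have "nn_cond_exp M (F n) (\<lambda>\<omega>. ennreal (VK K (Suc n) \<omega>)) \<omega> + ennreal (D n \<omega>)
            \<le> nn_cond_exp M (F n) (\<lambda>\<omega>. indicator (G K n) \<omega> * ennreal (V (Suc n) \<omega>)) \<omega> + ennreal (D n \<omega>)"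
          by (rule add_right_mono[OF elim(1)])
        also have "nn_cond_exp M (F n) (\<lambda>\<omega>. indicator (G K n) \<omega> * ennreal (V (Suc n) \<omega>)) \<omega>
            = nn_cond_exp M (F n) (\<lambda>\<omega>. ennreal (V (Suc n) \<omega>)) \<omega>"
          using elim(2) True by simp
        also have "nn_cond_exp M (F n) (\<lambda>\<omega>. ennreal (V (Suc n) \<omega>)) \<omega> + ennreal (D n \<omega>) \<le> ennreal (V n \<omega> + C n \<omega>)"
          by (rule elim(3))
        finally show ?thesis using True unfolding VK_def CK_def DK_def by simp
      next
        case False
        then show ?thesis using elim unfolding VK_def CK_def DK_def by simp
      qed
    qed
  qed
  have CKpart: "(\<Sum>k<N. CK K k \<omega>) \<le> real K" if w: "\<omega> \<in> space M" for K N \<omega>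
  proof (induction N)
    case (Suc N)
    show ?case
    proof (cases "\<omega> \<in> G K N")
      case True
      have "(\<Sum>k<Suc N. CK K k \<omega>) = (\<Sum>k\<le>N. C k \<omega>)"
      proof -
        have "CK K k \<omega> = C k \<omega>" if "k \<in> {..N}" for k
          using Gdec'[of k N K] that True unfolding CK_def by auto
        then show ?thesis using lessThan_Suc_atMost by (metis sum.cong)
      qed
      also have "\<dots> \<le> real K" using True unfolding G_def by simp
      finally show ?thesis .
    next
      case False
      then show ?thesis using Suc unfolding CK_def by simp
    qed
  qed simp
  have CKsum: "summable (\<lambda>n. CK K n \<omega>) \<and> (\<Sum>n. CK K n \<omega>) \<le> real K" if w: "\<omega> \<in> space M" for K \<omega>
  proof
    show s: "summable (\<lambda>n. CK K n \<omega>)"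
      by (rule summableI_nonneg_bounded[OF _ CKpart[OF w]]) (use nnK[OF w] in auto)
    show "(\<Sum>n. CK K n \<omega>) \<le> real K" by (rule suminf_le_const[OF s CKpart[OF w]])
  qed
  have VK0: "VK K 0 \<omega> \<le> real K" if "\<omega> \<in> space M" for K \<omega>
    unfolding VK_def G_def by (auto simp: indicator_def)
  have r1: "AE \<omega> in M. summable (\<lambda>n. DK K n \<omega>)" for K
    by (rule core1[OF prob subalg filt mVK mCK mDK nnK ineqK CKsum VK0])
  have r2: "AE \<omega> in M. (\<forall>\<eta>>0. \<forall>m. \<exists>n\<ge>m. VK K n \<omega> < \<eta>) \<longrightarrow> (\<lambda>n. VK K n \<omega>) \<longlonglongrightarrow> 0" for K
    by (rule core1b[OF prob subalg filt mVK mCK mDK nnK ineqK CKsum])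
  have "AE \<omega> in M. \<forall>K. summable (\<lambda>n. DK K n \<omega>) \<and> ((\<forall>\<eta>>0. \<forall>m. \<exists>n\<ge>m. VK K n \<omega> < \<eta>) \<longrightarrow> (\<lambda>n. VK K n \<omega>) \<longlonglongrightarrow> 0)"
    unfolding AE_all_countable using r1 r2 by (auto elim: AE_mp)
  then show ?thesis using Csum AE_space
  proof eventually_elim
    case (elim \<omega>)
    obtain K :: nat where K: "max (V 0 \<omega>) (\<Sum>n. C n \<omega>) \<le> real K" using real_arch_simple by blast
    have inG: "\<omega> \<in> G K n" for n
    proof -
      have "(\<Sum>k\<le>n. C k \<omega>) \<le> (\<Sum>n. C n \<omega>)"
        unfolding atMost_atLeast0 using elim nn
        by (metis atLeast0AtMost lessThan_Suc_atMost sum_le_suminf finite_lessThan)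
      then show ?thesis using K elim unfolding G_def by auto
    qed
    have eqV: "VK K n \<omega> = V n \<omega>" and eqD: "DK K n \<omega> = D n \<omega>" for n
      unfolding VK_def DK_def using inG by auto
    have X: "summable (\<lambda>n. DK K n \<omega>) \<and> ((\<forall>\<eta>>0. \<forall>m. \<exists>n\<ge>m. VK K n \<omega> < \<eta>) \<longrightarrow> (\<lambda>n. VK K n \<omega>) \<longlonglongrightarrow> 0)"
      using elim(1) by (rule spec)
    show ?case using X unfolding eqV eqD by blast
  qed
qed

lemma aux_div_le: "0 \<le> (c::real) \<Longrightarrow> 1 \<le> p \<Longrightarrow> c / p \<le> c"
  using divide_left_mono[of 1 p c] by simp

lemma aux_div: "0 < (p::real) \<Longrightarrow> 0 < b \<Longrightarrow> 1 / (p * b) * (b * v + c) = v / p + c / (p * b)"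
  by (simp add: field_simps)

lemma coreA:
  fixes M :: "'w measure" and F :: "nat \<Rightarrow> 'w measure" and V A C D :: "nat \<Rightarrow> 'w \<Rightarrow> real"
  assumes prob: "prob_space M"
    and subalg: "\<And>n. subalgebra M (F n)"
    and filt: "\<And>n m. n \<le> m \<Longrightarrow> sets (F n) \<subseteq> sets (F m)"
    and measV[measurable]: "\<And>n. V n \<in> borel_measurable (F n)"
    and measA[measurable]: "\<And>n. A n \<in> borel_measurable (F n)"
    and measC[measurable]: "\<And>n. C n \<in> borel_measurable (F n)"
    and measD[measurable]: "\<And>n. D n \<in> borel_measurable (F n)"
    and nn: "\<And>n \<omega>. \<omega> \<in> space M \<Longrightarrow> 0 \<le> V n \<omega> \<and> 0 \<le> A n \<omega> \<and> 0 \<le> C n \<omega> \<and> 0 \<le> D n \<omega>"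
    and ineq: "\<And>n. AE \<omega> in M. nn_cond_exp M (F n) (\<lambda>\<omega>. ennreal (V (Suc n) \<omega>)) \<omega> + ennreal (D n \<omega>)
                     \<le> ennreal ((1 + A n \<omega>) * V n \<omega> + C n \<omega>)"
    and Asum: "AE \<omega> in M. summable (\<lambda>n. A n \<omega>)"
    and Csum: "AE \<omega> in M. summable (\<lambda>n. C n \<omega>)"
  shows "AE \<omega> in M. summable (\<lambda>n. D n \<omega>) \<and> ((\<forall>\<eta>>0. \<forall>m. \<exists>n\<ge>m. V n \<omega> < \<eta>) \<longrightarrow> (\<lambda>n. V n \<omega>) \<longlonglongrightarrow> 0)"
proof -
  interpret prob_space M by fact
  have sf: "sigma_finite_subalgebra M (F n)" for n by (rule sfs_of_prob[OF prob subalg])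
  define P where "P n \<omega> = (\<Prod>k<n. 1 + A k \<omega>)" for n \<omega>
  have measP: "P n \<in> borel_measurable (F N)" if hn: "n \<le> Suc N" for n N
  proof -
    have "(\<lambda>\<omega>. 1 + A k \<omega>) \<in> borel_measurable (F N)" if hk: "k \<in> {..<n}" for k
    proof -
      have [measurable]: "A k \<in> borel_measurable (F N)"
        using meas_mono_filt[where M=M and F=F and k=k and n=N, OF subalg filt _ measA[of k]] hk hn by simp
      show ?thesis by measurable
    qed
    then show ?thesis unfolding P_def by (rule borel_measurable_prod)
  qed
  have P1: "1 \<le> P n \<omega>" if "\<omega> \<in> space M" for n \<omega>
    unfolding P_def using nn[OF that] by (intro prod_ge_1) auto
  have Pstep: "P (Suc n) \<omega> = P n \<omega> * (1 + A n \<omega>)" for n \<omega> by (simp add: P_def)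
  define V' where "V' n \<omega> = V n \<omega> / P n \<omega>" for n \<omega>
  define C' where "C' n \<omega> = C n \<omega> / P (Suc n) \<omega>" for n \<omega>
  define D' where "D' n \<omega> = D n \<omega> / P (Suc n) \<omega>" for n \<omega>
  have [measurable]: "P n \<in> borel_measurable (F n)" "P (Suc n) \<in> borel_measurable (F n)" for n
    by (rule measP; simp)+
  have mV'[measurable]: "V' n \<in> borel_measurable (F n)" for n unfolding V'_def by measurable
  have mC'[measurable]: "C' n \<in> borel_measurable (F n)" for n unfolding C'_def by measurable
  have mD'[measurable]: "D' n \<in> borel_measurable (F n)" for n unfolding D'_def by measurable
  have [measurable]: "V n \<in> borel_measurable M" for n by (rule measurable_from_subalg[OF subalg[of n] measV[of n]])
  have [measurable]: "V' n \<in> borel_measurable M" for n by (rule measurable_from_subalg[OF subalg[of n] mV'[of n]])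
  have [measurable]: "P (Suc n) \<in> borel_measurable M" for n by (rule measurable_from_subalg[OF subalg[of n] measP[of "Suc n" n]]) simp
  have nn': "0 \<le> V' n \<omega> \<and> 0 \<le> C' n \<omega> \<and> 0 \<le> D' n \<omega>" if w: "\<omega> \<in> space M" for n \<omega>
    unfolding V'_def C'_def D'_def using nn[OF w, of n] P1[OF w, of n] P1[OF w, of "Suc n"]
    by (auto intro!: divide_nonneg_nonneg)
  have ineq': "AE \<omega> in M. nn_cond_exp M (F n) (\<lambda>\<omega>. ennreal (V' (Suc n) \<omega>)) \<omega> + ennreal (D' n \<omega>)
                     \<le> ennreal (V' n \<omega> + C' n \<omega>)" for n
  proof -
    define q where "q \<omega> = ennreal (1 / P (Suc n) \<omega>)" for \<omega>
    have [measurable]: "q \<in> borel_measurable (F n)" unfolding q_def by measurable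
    have e1: "AE \<omega> in M. q \<omega> * nn_cond_exp M (F n) (\<lambda>\<omega>. ennreal (V (Suc n) \<omega>)) \<omega>
        = nn_cond_exp M (F n) (\<lambda>\<omega>. q \<omega> * ennreal (V (Suc n) \<omega>)) \<omega>"
      by (rule sigma_finite_subalgebra.nn_cond_exp_prod[OF sf]) auto
    have e2: "AE \<omega> in M. nn_cond_exp M (F n) (\<lambda>\<omega>. ennreal (V' (Suc n) \<omega>)) \<omega>
        = nn_cond_exp M (F n) (\<lambda>\<omega>. q \<omega> * ennreal (V (Suc n) \<omega>)) \<omega>"
    proof (rule sigma_finite_subalgebra.nn_cond_exp_cong[OF sf])
      show "AE \<omega> in M. ennreal (V' (Suc n) \<omega>) = q \<omega> * ennreal (V (Suc n) \<omega>)"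
        using AE_space
      proof eventually_elim
        case (elim \<omega>)
        then show ?case unfolding V'_def q_def using nn[OF elim, of "Suc n"] P1[OF elim, of "Suc n"]
          by (simp add: ennreal_mult[symmetric])
      qed
    qed (auto simp: q_def)
    show ?thesis using e1 e2 ineq[of n] AE_space
    proof eventually_elim
      case (elim \<omega>)
      have w: "\<omega> \<in> space M" by fact
      have Pp: "0 < P n \<omega>" "0 < P (Suc n) \<omega>" using P1[OF w, of n] P1[OF w, of "Suc n"] by auto
      have qD: "ennreal (D' n \<omega>) = q \<omega> * ennreal (D n \<omega>)"
        unfolding D'_def q_def using nn[OF w, of n] Pp by (simp add: ennreal_mult[symmetric])
      have "nn_cond_exp M (F n) (\<lambda>\<omega>. ennreal (V' (Suc n) \<omega>)) \<omega> + ennreal (D' n \<omega>)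
          = q \<omega> * (nn_cond_exp M (F n) (\<lambda>\<omega>. ennreal (V (Suc n) \<omega>)) \<omega> + ennreal (D n \<omega>))"
        using elim(1) elim(2) qD by (simp add: distrib_left)
      also have "\<dots> \<le> q \<omega> * ennreal ((1 + A n \<omega>) * V n \<omega> + C n \<omega>)"
        by (rule mult_left_mono[OF elim(3)]) simp
      also have "\<dots> = ennreal (1 / P (Suc n) \<omega> * ((1 + A n \<omega>) * V n \<omega> + C n \<omega>))"
        unfolding q_def by (rule ennreal_mult[symmetric]) (use nn[OF w, of n] Pp in auto)
      also have "1 / P (Suc n) \<omega> * ((1 + A n \<omega>) * V n \<omega> + C n \<omega>) = V' n \<omega> + C' n \<omega>"
        unfolding V'_def C'_def Pstep by (rule aux_div) (use Pp nn[OF w, of n] in auto)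
      finally show ?case .
    qed
  qed
  have Csum': "AE \<omega> in M. summable (\<lambda>n. C' n \<omega>)"
    using Csum AE_space
  proof eventually_elim
    case (elim \<omega>)
    show ?case
    proof (rule summable_comparison_test'[OF elim(1)])
      fix n
      show "norm (C' n \<omega>) \<le> C n \<omega>" unfolding C'_def using nn[OF elim(2), of n] P1[OF elim(2), of "Suc n"]
        by (simp add: aux_div_le)
    qed
  qed
  have r: "AE \<omega> in M. summable (\<lambda>n. D' n \<omega>) \<and> ((\<forall>\<eta>>0. \<forall>m. \<exists>n\<ge>m. V' n \<omega> < \<eta>) \<longrightarrow> (\<lambda>n. V' n \<omega>) \<longlonglongrightarrow> 0)"
    by (rule core0[OF prob subalg filt mV' mC' mD' nn' ineq' Csum'])
  show ?thesis using r Asum AE_space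
  proof eventually_elim
    case (elim \<omega>)
    have w: "\<omega> \<in> space M" by fact
    define S where "S = exp (\<Sum>n. A n \<omega>)"
    have PS: "P n \<omega> \<le> S" for n
    proof -
      have "P n \<omega> \<le> (\<Prod>k<n. exp (A k \<omega>))"
        unfolding P_def using nn[OF w] by (intro prod_mono) auto
      also have "\<dots> = exp (\<Sum>k<n. A k \<omega>)" by (simp add: exp_sum)
      also have "\<dots> \<le> S" unfolding S_def using elim(2) nn[OF w]
        by (simp add: sum_le_suminf)
      finally show ?thesis .
    qed
    have S0: "0 < S" unfolding S_def by simp
    have Pp: "0 < P n \<omega>" for n using P1[OF w, of n] by simp
    have sD: "summable (\<lambda>n. D n \<omega>)"
    proof (rule summable_comparison_test'[OF summable_mult[OF conjunct1[OF elim(1)], of S]])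
      fix n
      have "D n \<omega> = D' n \<omega> * P (Suc n) \<omega>" unfolding D'_def using Pp[of "Suc n"] by simp
      also have "\<dots> \<le> D' n \<omega> * S" using PS[of "Suc n"] nn'[OF w, of n] by (intro mult_left_mono) auto
      finally show "norm (D n \<omega>) \<le> S * D' n \<omega>" using nn[OF w, of n] by (simp add: mult.commute)
    qed
    have lim: "(\<lambda>n. V n \<omega>) \<longlonglongrightarrow> 0" if li: "\<forall>\<eta>>0. \<forall>m. \<exists>n\<ge>m. V n \<omega> < \<eta>"
    proof -
      have VV: "V' n \<omega> \<le> V n \<omega>" for n
        unfolding V'_def using P1[OF w, of n] nn[OF w, of n] by (simp add: aux_div_le)
      have "\<forall>\<eta>>0. \<forall>m. \<exists>n\<ge>m. V' n \<omega> < \<eta>"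
        using li VV le_less_trans by blast
      then have V'0: "(\<lambda>n. V' n \<omega>) \<longlonglongrightarrow> 0" using elim(1) by blast
      show ?thesis
      proof (rule Lim_null_comparison[OF _ tendsto_mult_right_zero[OF V'0, of S]])
        show "\<forall>\<^sub>F n in sequentially. norm (V n \<omega>) \<le> S * V' n \<omega>"
        proof (rule always_eventually, rule allI)
          fix n
          have "V n \<omega> = V' n \<omega> * P n \<omega>" unfolding V'_def using Pp[of n] by simp
          also have "\<dots> \<le> V' n \<omega> * S" using PS[of n] nn'[OF w, of n] by (intro mult_left_mono) auto
          finally show "norm (V n \<omega>) \<le> S * V' n \<omega>" using nn[OF w, of n] by (simp add: mult.commute)
        qed
      qed
    qed
    show ?case using sD lim by blast
  qed
qed

lemma pw1:
  fixes z z' b B :: real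
  assumes z: "0 \<le> z" and z': "0 \<le> z'" and b: "0 \<le> b" and B: "0 \<le> B"
    and d: "\<bar>z' - z\<bar> \<le> b * (z + 1)"
  shows "(max (z' - B) 0)\<^sup>2 + 2 * max (z - B) 0 * z \<le> (max (z - B) 0)\<^sup>2 + 2 * max (z - B) 0 * z' + b\<^sup>2 * (z + 1)\<^sup>2"
proof -
  have dd: "(z' - z)\<^sup>2 \<le> b\<^sup>2 * (z + 1)\<^sup>2"
  proof -
    have "(z' - z)\<^sup>2 = \<bar>z' - z\<bar>\<^sup>2" by simp
    also have "\<dots> \<le> (b * (z + 1))\<^sup>2" by (rule power_mono[OF d]) simp
    also have "\<dots> = b\<^sup>2 * (z + 1)\<^sup>2" by (simp add: power_mult_distrib)
    finally show ?thesis .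
  qed
  show ?thesis
  proof (cases "B < z")
    case True
    then have s: "max (z - B) 0 = z - B" by simp
    have m: "(max (z' - B) 0)\<^sup>2 \<le> (z' - B)\<^sup>2"
      by (cases "B \<le> z'") (auto simp: max_def)
    have "(z' - B)\<^sup>2 = (z - B)\<^sup>2 + 2 * (z - B) * (z' - z) + (z' - z)\<^sup>2"
      by (simp add: power2_eq_square algebra_simps)
    then show ?thesis unfolding s using m dd by (simp add: algebra_simps)
  next
    case False
    then have s: "max (z - B) 0 = 0" by simp
    have "(max (z' - B) 0)\<^sup>2 \<le> (z' - z)\<^sup>2"
    proof (cases "B \<le> z'")
      case True
      then have "0 \<le> z' - B" "z' - B \<le> z' - z" using False by auto
      then have "(z' - B)\<^sup>2 \<le> (z' - z)\<^sup>2" by (intro power_mono) auto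
      then show ?thesis using True by (simp add: max_def)
    qed (simp add: max_def)
    then show ?thesis unfolding s using dd by simp
  qed
qed

lemma pw2:
  fixes z a x y b c B r :: real and e1 e2 :: ennreal
  assumes nn: "0 \<le> z" "0 \<le> a" "0 \<le> x" "0 \<le> y" "0 \<le> b" "0 \<le> c" "0 \<le> B"
    and H1: "e1 + ennreal (2 * max (z - B) 0 * z)
           \<le> ennreal ((max (z - B) 0)\<^sup>2) + ennreal (b\<^sup>2 * (z + 1)\<^sup>2) + ennreal (2 * max (z - B) 0) * e2"
    and H2: "e2 + ennreal y \<le> ennreal ((1 + a) * z + x)"
    and A3: "z > B \<Longrightarrow> x - y \<le> - c * (z - B)"
  shows "e1 + ennreal (2 * c * (max (z - B) 0)\<^sup>2)
     \<le> ennreal ((1 + ((2 + B) * a + 2 * b\<^sup>2)) * (max (z - B) 0)\<^sup>2 + (a * B + 2 * b\<^sup>2 * (B + 1)\<^sup>2))"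
proof (cases "B < z")
  case False
  then have s: "max (z - B) 0 = 0" by simp
  have "e1 \<le> ennreal (b\<^sup>2 * (z + 1)\<^sup>2)" using H1 unfolding s by simp
  also have "b\<^sup>2 * (z + 1)\<^sup>2 \<le> a * B + 2 * b\<^sup>2 * (B + 1)\<^sup>2"
  proof -
    have "(z + 1)\<^sup>2 \<le> (B + 1)\<^sup>2" using False nn by (intro power_mono) auto
    then have "b\<^sup>2 * (z + 1)\<^sup>2 \<le> b\<^sup>2 * (B + 1)\<^sup>2" by (intro mult_left_mono) auto
    moreover have "0 \<le> a * B" "0 \<le> b\<^sup>2 * (B + 1)\<^sup>2" using nn by auto
    ultimately show ?thesis by linarith
  qed
  finally show ?thesis unfolding s by (simp add: ennreal_leI)
next
  case True
  define s where "s = z - B"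
  have s0: "0 < s" and ms: "max (z - B) 0 = s" and zs: "z = B + s" using True unfolding s_def by auto
  have R0: "0 \<le> (1 + a) * z + x" using nn by simp
  obtain r2 where r2: "0 \<le> r2" "e2 = ennreal r2"
  proof (cases e2 rule: ennreal_cases)
    case top
    then show ?thesis using H2 by (simp add: top.extremum_unique)
  qed
  have r2le: "r2 + y \<le> (1 + a) * z + x"
    using H2 R0 nn r2 by (simp add: ennreal_plus[symmetric] del: ennreal_plus)
  have H1': "e1 + ennreal (2 * s * z) \<le> ennreal (s\<^sup>2) + ennreal (b\<^sup>2 * (z + 1)\<^sup>2) + ennreal (2 * s) * e2"
    using H1 unfolding ms .
  have RHS1: "ennreal (s\<^sup>2) + ennreal (b\<^sup>2 * (z + 1)\<^sup>2) + ennreal (2 * s) * e2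
      = ennreal (s\<^sup>2 + b\<^sup>2 * (z + 1)\<^sup>2 + 2 * s * r2)"
    unfolding r2(2) using s0 r2(1) nn
    by (simp add: ennreal_mult[symmetric] ennreal_plus[symmetric] del: ennreal_plus)
  have H1'': "e1 + ennreal (2 * s * z) \<le> ennreal (s\<^sup>2 + b\<^sup>2 * (z + 1)\<^sup>2 + 2 * s * r2)"
    using H1' unfolding RHS1 .
  obtain r1 where r1: "0 \<le> r1" "e1 = ennreal r1"
  proof (cases e1 rule: ennreal_cases)
    case top
    then show ?thesis using H1'' by (simp add: top.extremum_unique)
  qed
  have r1le: "r1 + 2 * s * z \<le> s\<^sup>2 + b\<^sup>2 * (z + 1)\<^sup>2 + 2 * s * r2"
  proof -
    have "ennreal (r1 + 2 * s * z) \<le> ennreal (s\<^sup>2 + b\<^sup>2 * (z + 1)\<^sup>2 + 2 * s * r2)"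
      using H1'' unfolding r1(2) using r1(1) s0 nn by (simp add: ennreal_plus[symmetric] del: ennreal_plus)
    moreover have "0 \<le> s\<^sup>2 + b\<^sup>2 * (z + 1)\<^sup>2 + 2 * s * r2" using s0 r2(1) by simp
    ultimately show ?thesis by (simp add: ennreal_le_iff)
  qed
  have k3: "s * r2 \<le> s * ((1 + a) * z - c * s)"
    using r2le A3[OF True] s0 unfolding s_def by (intro mult_left_mono) auto
  have k1: "2 * a * s * z \<le> (2 + B) * a * s\<^sup>2 + a * B"
  proof -
    have "0 \<le> B * (s - 1)\<^sup>2" using nn by simp
    then have "2 * s * z \<le> (2 + B) * s\<^sup>2 + B" unfolding zs by (simp add: power2_eq_square algebra_simps)
    then have "a * (2 * s * z) \<le> a * ((2 + B) * s\<^sup>2 + B)" using nn by (intro mult_left_mono) auto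
    then show ?thesis by (simp add: algebra_simps)
  qed
  have k2: "b\<^sup>2 * (z + 1)\<^sup>2 \<le> 2 * b\<^sup>2 * s\<^sup>2 + 2 * b\<^sup>2 * (B + 1)\<^sup>2"
  proof -
    have "0 \<le> (s - (B + 1))\<^sup>2" by simp
    then have "(z + 1)\<^sup>2 \<le> 2 * s\<^sup>2 + 2 * (B + 1)\<^sup>2" unfolding zs by (simp add: power2_eq_square algebra_simps)
    then have "b\<^sup>2 * (z + 1)\<^sup>2 \<le> b\<^sup>2 * (2 * s\<^sup>2 + 2 * (B + 1)\<^sup>2)" by (intro mult_left_mono) auto
    then show ?thesis by (simp add: algebra_simps)
  qed
  have main: "r1 + 2 * c * s\<^sup>2 \<le> (1 + ((2 + B) * a + 2 * b\<^sup>2)) * s\<^sup>2 + (a * B + 2 * b\<^sup>2 * (B + 1)\<^sup>2)"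
  proof -
    have e: "s * ((1 + a) * z - c * s) = s * z + a * s * z - c * s\<^sup>2" by (simp add: power2_eq_square algebra_simps)
    have "r1 \<le> s\<^sup>2 + b\<^sup>2 * (z + 1)\<^sup>2 + 2 * (s * r2) - 2 * s * z" using r1le by (simp add: algebra_simps)
    also have "\<dots> \<le> s\<^sup>2 + b\<^sup>2 * (z + 1)\<^sup>2 + 2 * (s * z + a * s * z - c * s\<^sup>2) - 2 * s * z"
      using k3 unfolding e by simp
    also have "\<dots> = s\<^sup>2 + b\<^sup>2 * (z + 1)\<^sup>2 + 2 * a * s * z - 2 * c * s\<^sup>2" by (simp add: algebra_simps)
    finally have "r1 \<le> s\<^sup>2 + b\<^sup>2 * (z + 1)\<^sup>2 + 2 * a * s * z - 2 * c * s\<^sup>2" .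
    then have "r1 + 2 * c * s\<^sup>2 \<le> s\<^sup>2 + (2 * b\<^sup>2 * s\<^sup>2 + 2 * b\<^sup>2 * (B + 1)\<^sup>2) + ((2 + B) * a * s\<^sup>2 + a * B)"
      using k1 k2 by linarith
    then show ?thesis by (simp add: algebra_simps)
  qed
  have nnR: "0 \<le> 2 * c * s\<^sup>2" using nn by simp
  show ?thesis unfolding ms r1(2) using main r1(1) nnR
    by (simp add: ennreal_plus[symmetric] ennreal_leI del: ennreal_plus)
qed


lemma infdist_bound:
  fixes z B :: real
  assumes "0 \<le> z" "0 \<le> B"
  shows "infdist z {0..B} \<le> max (z - B) 0"
proof -
  have "min z B \<in> {0..B}" using assms by auto
  then have "infdist z {0..B} \<le> dist z (min z B)" by (rule infdist_le)
  also have "\<dots> = max (z - B) 0" by (simp add: dist_real_def min_def max_def)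
  finally show ?thesis .
qed

theorem theorem2:
  fixes M :: "'w measure" and F :: "nat \<Rightarrow> 'w measure"
    and z a x y b c :: "nat \<Rightarrow> 'w \<Rightarrow> real" and B :: real
  assumes prob: "prob_space M"
    and subalg: "\<And>n. subalgebra M (F n)"
    and filt_mono: "\<And>n m. n \<le> m \<Longrightarrow> sets (F n) \<subseteq> sets (F m)"
    and adapted: "\<And>n. z n \<in> borel_measurable (F n)" "\<And>n. a n \<in> borel_measurable (F n)"
                 "\<And>n. x n \<in> borel_measurable (F n)" "\<And>n. y n \<in> borel_measurable (F n)"
                 "\<And>n. b n \<in> borel_measurable (F n)" "\<And>n. c n \<in> borel_measurable (F n)"
    and nonneg: "\<And>n \<omega>. \<omega> \<in> space M \<Longrightarrow> z n \<omega> \<ge> 0 \<and> a n \<omega> \<ge> 0 \<and> x n \<omega> \<ge> 0 \<and> y n \<omega> \<ge> 0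
                    \<and> b n \<omega> \<ge> 0 \<and> c n \<omega> \<ge> 0"
    and cond: "\<And>n. AE \<omega> in M. nn_cond_exp M (F n) (\<lambda>\<omega>. ennreal (z (Suc n) \<omega>)) \<omega> + ennreal (y n \<omega>)
                   \<le> ennreal ((1 + a n \<omega>) * z n \<omega> + x n \<omega>)"
    and A1: "AE \<omega> in M. summable (\<lambda>n. a n \<omega>)"
    and A2: "\<And>n. AE \<omega> in M. \<bar>z (Suc n) \<omega> - z n \<omega>\<bar> \<le> b n \<omega> * (z n \<omega> + 1)"
    and A2b: "AE \<omega> in M. summable (\<lambda>n. (b n \<omega>)\<^sup>2)"
    and A3: "B \<ge> 0"
    and A3b: "\<And>n \<omega>. \<omega> \<in> space M \<Longrightarrow> z n \<omega> > B \<Longrightarrow> x n \<omega> - y n \<omega> \<le> - c n \<omega> * (z n \<omega> - B)"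
    and A3c: "AE \<omega> in M. \<not> summable (\<lambda>n. c n \<omega>)"
  shows "AE \<omega> in M. (\<lambda>n. infdist (z n \<omega>) {0..B}) \<longlonglongrightarrow> 0"
proof -
  interpret prob_space M by (rule prob)
  have sf: "sigma_finite_subalgebra M (F n)" for n by (rule sfs_of_prob[OF prob subalg])
  have mz[measurable]: "z n \<in> borel_measurable (F n)" for n by (rule adapted(1))
  have ma[measurable]: "a n \<in> borel_measurable (F n)" for n by (rule adapted(2))
  have mx[measurable]: "x n \<in> borel_measurable (F n)" for n by (rule adapted(3))
  have my[measurable]: "y n \<in> borel_measurable (F n)" for n by (rule adapted(4))
  have mb[measurable]: "b n \<in> borel_measurable (F n)" for n by (rule adapted(5))
  have mc[measurable]: "c n \<in> borel_measurable (F n)" for n by (rule adapted(6))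
  have mzM[measurable]: "z n \<in> borel_measurable M" for n by (rule measurable_from_subalg[OF subalg[of n] mz[of n]])
  define s where "s n \<omega> = max (z n \<omega> - B) 0" for n \<omega>
  define u where "u n \<omega> = (s n \<omega>)\<^sup>2" for n \<omega>
  define G where "G n \<omega> = (b n \<omega>)\<^sup>2 * (z n \<omega> + 1)\<^sup>2" for n \<omega>
  define Av where "Av n \<omega> = (2 + B) * a n \<omega> + 2 * (b n \<omega>)\<^sup>2" for n \<omega>
  define Cv where "Cv n \<omega> = a n \<omega> * B + 2 * (b n \<omega>)\<^sup>2 * (B + 1)\<^sup>2" for n \<omega>
  define Dv where "Dv n \<omega> = 2 * c n \<omega> * u n \<omega>" for n \<omega>
  have ms[measurable]: "s n \<in> borel_measurable (F n)" for n unfolding s_def by measurable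
  have mu[measurable]: "u n \<in> borel_measurable (F n)" for n unfolding u_def by measurable
  have mG[measurable]: "G n \<in> borel_measurable (F n)" for n unfolding G_def by measurable
  have mAv[measurable]: "Av n \<in> borel_measurable (F n)" for n unfolding Av_def by measurable
  have mCv[measurable]: "Cv n \<in> borel_measurable (F n)" for n unfolding Cv_def by measurable
  have mDv[measurable]: "Dv n \<in> borel_measurable (F n)" for n unfolding Dv_def by measurable
  have [measurable]: "u n \<in> borel_measurable M" for n by (rule measurable_from_subalg[OF subalg[of n] mu[of n]])
  have [measurable]: "s n \<in> borel_measurable M" for n by (rule measurable_from_subalg[OF subalg[of n] ms[of n]])
  have [measurable]: "G n \<in> borel_measurable M" for n by (rule measurable_from_subalg[OF subalg[of n] mG[of n]])
  have s_nn: "0 \<le> s n \<omega>" for n \<omega> unfolding s_def by simp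
  have nnall: "0 \<le> u n \<omega> \<and> 0 \<le> Av n \<omega> \<and> 0 \<le> Cv n \<omega> \<and> 0 \<le> Dv n \<omega>" if w: "\<omega> \<in> space M" for n \<omega>
    unfolding u_def Av_def Cv_def Dv_def using nonneg[OF w, of n] A3 by auto
  have ineq: "AE \<omega> in M. nn_cond_exp M (F n) (\<lambda>\<omega>. ennreal (u (Suc n) \<omega>)) \<omega> + ennreal (Dv n \<omega>)
                     \<le> ennreal ((1 + Av n \<omega>) * u n \<omega> + Cv n \<omega>)" for n
  proof -
    define L where "L \<omega> = ennreal (u (Suc n) \<omega>) + ennreal (2 * s n \<omega> * z n \<omega>)" for \<omega>
    define R1 where "R1 \<omega> = ennreal (u n \<omega>) + ennreal (G n \<omega>)" for \<omega>
    define R where "R \<omega> = R1 \<omega> + ennreal (2 * s n \<omega>) * ennreal (z (Suc n) \<omega>)" for \<omega>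
    have [measurable]: "L \<in> borel_measurable M" "R1 \<in> borel_measurable (F n)" "R \<in> borel_measurable M"
      unfolding L_def R1_def R_def by measurable
    have [measurable]: "R1 \<in> borel_measurable M" by (rule measurable_from_subalg[OF subalg[of n]]) measurable
    have h0: "AE \<omega> in M. L \<omega> \<le> R \<omega>"
      using A2[of n] AE_space
    proof eventually_elim
      case (elim \<omega>)
      note nn = nonneg[OF elim(2), of n] nonneg[OF elim(2), of "Suc n"]
      have "u (Suc n) \<omega> + 2 * s n \<omega> * z n \<omega> \<le> u n \<omega> + G n \<omega> + 2 * s n \<omega> * z (Suc n) \<omega>"
        using pw1[of "z n \<omega>" "z (Suc n) \<omega>" "b n \<omega>" B] elim(1) nn A3
        unfolding u_def s_def G_def by (simp add: algebra_simps)
      then have "ennreal (u (Suc n) \<omega> + 2 * s n \<omega> * z n \<omega>) \<le> ennreal (u n \<omega> + G n \<omega> + 2 * s n \<omega> * z (Suc n) \<omega>)"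
        by (rule ennreal_leI)
      moreover have "L \<omega> = ennreal (u (Suc n) \<omega> + 2 * s n \<omega> * z n \<omega>)"
        unfolding L_def using nn s_nn[of n \<omega>] by (simp add: u_def ennreal_plus)
      moreover have "R \<omega> = ennreal (u n \<omega> + G n \<omega> + 2 * s n \<omega> * z (Suc n) \<omega>)"
      proof -
        have p1: "0 \<le> u n \<omega>" "0 \<le> G n \<omega>" "0 \<le> 2 * s n \<omega> * z (Suc n) \<omega>"
          using nn s_nn[of n \<omega>] by (auto simp: u_def G_def)
        show ?thesis unfolding R_def R1_def using p1 nn s_nn[of n \<omega>]
          by (simp add: ennreal_mult[symmetric] ennreal_plus[symmetric] add_nonneg_nonneg del: ennreal_plus)
      qed
      ultimately show ?case by simp
    qed
    have h1: "AE \<omega> in M. nn_cond_exp M (F n) L \<omega> \<le> nn_cond_exp M (F n) R \<omega>"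
      by (rule sigma_finite_subalgebra.nn_cond_exp_mono[OF sf h0]) auto
    have h2: "AE \<omega> in M. nn_cond_exp M (F n) (\<lambda>\<omega>. ennreal (u (Suc n) \<omega>)) \<omega> + nn_cond_exp M (F n) (\<lambda>\<omega>. ennreal (2 * s n \<omega> * z n \<omega>)) \<omega>
        = nn_cond_exp M (F n) L \<omega>"
      unfolding L_def by (rule sigma_finite_subalgebra.nn_cond_exp_sum[OF sf]) auto
    have h3: "AE \<omega> in M. ennreal (2 * s n \<omega> * z n \<omega>) = nn_cond_exp M (F n) (\<lambda>\<omega>. ennreal (2 * s n \<omega> * z n \<omega>)) \<omega>"
      by (rule sigma_finite_subalgebra.nn_cond_exp_F_meas[OF sf]) measurable
    have h4: "AE \<omega> in M. nn_cond_exp M (F n) R1 \<omega> + nn_cond_exp M (F n) (\<lambda>\<omega>. ennreal (2 * s n \<omega>) * ennreal (z (Suc n) \<omega>)) \<omega>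
        = nn_cond_exp M (F n) R \<omega>"
      unfolding R_def by (rule sigma_finite_subalgebra.nn_cond_exp_sum[OF sf]) auto
    have h5: "AE \<omega> in M. R1 \<omega> = nn_cond_exp M (F n) R1 \<omega>"
      by (rule sigma_finite_subalgebra.nn_cond_exp_F_meas[OF sf]) measurable
    have h6: "AE \<omega> in M. ennreal (2 * s n \<omega>) * nn_cond_exp M (F n) (\<lambda>\<omega>. ennreal (z (Suc n) \<omega>)) \<omega>
        = nn_cond_exp M (F n) (\<lambda>\<omega>. ennreal (2 * s n \<omega>) * ennreal (z (Suc n) \<omega>)) \<omega>"
      by (rule sigma_finite_subalgebra.nn_cond_exp_prod[OF sf]) auto
    show ?thesis using h1 h2 h3 h4 h5 h6 cond[of n] AE_space
    proof eventually_elim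
      case (elim \<omega>)
      note nn = nonneg[OF elim(8), of n]
      define e1 where "e1 = nn_cond_exp M (F n) (\<lambda>\<omega>. ennreal (u (Suc n) \<omega>)) \<omega>"
      define e2 where "e2 = nn_cond_exp M (F n) (\<lambda>\<omega>. ennreal (z (Suc n) \<omega>)) \<omega>"
      have H1: "e1 + ennreal (2 * s n \<omega> * z n \<omega>) \<le> R1 \<omega> + ennreal (2 * s n \<omega>) * e2"
        using elim(1-6) unfolding e1_def e2_def by simp
      have H1': "e1 + ennreal (2 * max (z n \<omega> - B) 0 * z n \<omega>)
           \<le> ennreal ((max (z n \<omega> - B) 0)\<^sup>2) + ennreal ((b n \<omega>)\<^sup>2 * (z n \<omega> + 1)\<^sup>2) + ennreal (2 * max (z n \<omega> - B) 0) * e2"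
        using H1 unfolding R1_def u_def s_def G_def .
      have H2: "e2 + ennreal (y n \<omega>) \<le> ennreal ((1 + a n \<omega>) * z n \<omega> + x n \<omega>)"
        using elim(7) unfolding e2_def .
      have "e1 + ennreal (2 * c n \<omega> * (max (z n \<omega> - B) 0)\<^sup>2)
         \<le> ennreal ((1 + ((2 + B) * a n \<omega> + 2 * (b n \<omega>)\<^sup>2)) * (max (z n \<omega> - B) 0)\<^sup>2 + (a n \<omega> * B + 2 * (b n \<omega>)\<^sup>2 * (B + 1)\<^sup>2))"
        by (rule pw2[OF _ _ _ _ _ _ A3 H1' H2 A3b[OF elim(8)]]) (use nn in auto)
      then show ?case unfolding e1_def Dv_def Av_def Cv_def u_def s_def .
    qed
  qed
  have Asum: "AE \<omega> in M. summable (\<lambda>n. Av n \<omega>)"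
    using A1 A2b
  proof eventually_elim
    case (elim \<omega>)
    show ?case unfolding Av_def
      by (rule summable_add[OF summable_mult[OF elim(1)] summable_mult[OF elim(2)]])
  qed
  have Csum: "AE \<omega> in M. summable (\<lambda>n. Cv n \<omega>)"
    using A1 A2b
  proof eventually_elim
    case (elim \<omega>)
    show ?case unfolding Cv_def
      by (rule summable_add[OF summable_mult2[OF elim(1)] summable_mult2[OF summable_mult[OF elim(2)]]])
  qed
  have core: "AE \<omega> in M. summable (\<lambda>n. Dv n \<omega>) \<and> ((\<forall>\<eta>>0. \<forall>m. \<exists>n\<ge>m. u n \<omega> < \<eta>) \<longrightarrow> (\<lambda>n. u n \<omega>) \<longlonglongrightarrow> 0)"
    by (rule coreA[OF prob subalg filt_mono mu mAv mCv mDv nnall ineq Asum Csum])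
  show ?thesis using core A3c AE_space
  proof eventually_elim
    case (elim \<omega>)
    have w: "\<omega> \<in> space M" by fact
    have li: "\<forall>\<eta>>0. \<forall>m. \<exists>n\<ge>m. u n \<omega> < \<eta>"
    proof (rule ccontr)
      assume "\<not> (\<forall>\<eta>>0. \<forall>m. \<exists>n\<ge>m. u n \<omega> < \<eta>)"
      then obtain \<eta> m where eta: "0 < \<eta>" and big: "\<And>n. n \<ge> m \<Longrightarrow> \<eta> \<le> u n \<omega>"
        by (auto simp: not_less)
      have "summable (\<lambda>n. c n \<omega>)"
      proof (rule summable_comparison_test'[OF summable_mult[OF conjunct1[OF elim(1)], of "1 / (2 * \<eta>)"]])
        fix n assume "m \<le> n"
        then have "\<eta> \<le> u n \<omega>" by (rule big)
        then have "c n \<omega> * \<eta> \<le> c n \<omega> * u n \<omega>" using nonneg[OF w, of n] by (intro mult_left_mono) auto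
        then have "c n \<omega> \<le> c n \<omega> * u n \<omega> / \<eta>" using eta by (simp add: pos_le_divide_eq)
        then show "norm (c n \<omega>) \<le> 1 / (2 * \<eta>) * Dv n \<omega>"
          unfolding Dv_def using nonneg[OF w, of n] by simp
      qed
      then show False using elim(2) by blast
    qed
    then have u0: "(\<lambda>n. u n \<omega>) \<longlonglongrightarrow> 0" using elim(1) by blast
    have "(\<lambda>n. sqrt (u n \<omega>)) \<longlonglongrightarrow> sqrt 0" by (rule tendsto_real_sqrt[OF u0])
    then have s0: "(\<lambda>n. s n \<omega>) \<longlonglongrightarrow> 0" unfolding u_def using s_nn by simp
    show ?case
    proof (rule Lim_null_comparison[OF _ s0])
      show "\<forall>\<^sub>F n in sequentially. norm (infdist (z n \<omega>) {0..B}) \<le> s n \<omega>"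
        using infdist_bound[OF _ A3] nonneg[OF w] unfolding s_def by (simp add: infdist_nonneg)
    qed
  qed
qed

end
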